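(* Let $n\to\infty$, $N=N(n)$ and $p=p(n)$ satisfy $np\ge \left(\log\frac Nn\right)/6$ and $N\ge 3n$. Then asymptotically almost surely, for every two disjoint sets $S,T\subseteq[N]$ with $|S|=|T|=n$, the number of edges of $G\sim G(N,p)$ contained in $S\cup T$ and having at least one endpoint in $S$ is at most $18n^2p$.
   Context: $G(N,p)$ denotes the Erdős–Rényi random graph on vertex set $[N]$ in which each pair is an edge independently with probability $p$. All logarithms are natural. "Asymptotically almost surely" means with probability tending to $1$ as $n\to\infty$. *)

theory Defs
  imports "HOL-Probability.Probability"
begin

text \<open>Potential edges of a graph on vertex set [N] = {1..N}, as ordered pairs (i,j) with i < j.\<close>
definition pairs :: "nat \<Rightarrow> (nat \<times> nat) set" where
  "pairs N = {(i,j). 1 \<le> i \<and> i < j \<and> j \<le> N}"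

text \<open>Erdos-Renyi random graph G(N,p): each pair independently an edge with probability p.
  A graph is represented by its edge indicator on pairs (False outside pairs N).\<close>
definition gnp :: "nat \<Rightarrow> real \<Rightarrow> (nat \<times> nat \<Rightarrow> bool) pmf" where
  "gnp N p = Pi_pmf (pairs N) False (\<lambda>_. bernoulli_pmf p)"

definition edges_ST :: "nat \<Rightarrow> (nat \<times> nat \<Rightarrow> bool) \<Rightarrow> nat set \<Rightarrow> nat set \<Rightarrow> nat" where
  "edges_ST N G S T = card {(i,j) \<in> pairs N. G (i,j) \<and> i \<in> S \<union> T \<and> j \<in> S \<union> T \<and> (i \<in> S \<or> j \<in> S)}"

end

theory Submission imports Defs "HOL-Real_Asymp.Real_Asymp" begin

lemma prob_all_true:
  assumes "finite I" "A \<subseteq> I" "0 \<le> p" "p \<le> 1"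
  shows "measure_pmf.prob (Pi_pmf I False (\<lambda>_. bernoulli_pmf p)) {G. \<forall>e\<in>A. G e} = p ^ card A"
proof -
  have fA: "finite A" using assms finite_subset by blast
  have "{G. \<forall>e\<in>A. G e} = Pi I (\<lambda>e. if e \<in> A then {True} else UNIV)"
    using assms(2) by (auto simp: Pi_def)
  then have "measure_pmf.prob (Pi_pmf I False (\<lambda>_. bernoulli_pmf p)) {G. \<forall>e\<in>A. G e}
     = (\<Prod>e\<in>I. measure_pmf.prob (bernoulli_pmf p) (if e \<in> A then {True} else UNIV))"
    by (simp add: measure_Pi_pmf_Pi assms(1))
  also have "\<dots> = (\<Prod>e\<in>I. if e \<in> A then p else 1)"
    by (intro prod.cong refl) (simp add: measure_pmf_single assms)
  also have "\<dots> = p ^ card A"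
    using assms(1,2) fA by (simp add: prod.If_cases Int_absorb1)
  finally show ?thesis .
qed

lemma tail_bound:
  assumes "finite I" "M \<subseteq> I" "0 \<le> p" "p \<le> 1"
  shows "measure_pmf.prob (Pi_pmf I False (\<lambda>_. bernoulli_pmf p)) {G. t \<le> card {e\<in>M. G e}}
          \<le> real (card M choose t) * p ^ t"
proof -
  let ?Q = "Pi_pmf I False (\<lambda>_. bernoulli_pmf p)"
  let ?X = "{A. A \<subseteq> M \<and> card A = t}"
  have fM: "finite M" using assms finite_subset by blast
  have sub: "{G. t \<le> card {e\<in>M. G e}} \<subseteq> (\<Union>A\<in>?X. {G. \<forall>e\<in>A. G e})"
  proof
    fix G assume "G \<in> {G. t \<le> card {e\<in>M. G e}}"
    then have "t \<le> card {e\<in>M. G e}" by simp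
    then obtain A where "A \<subseteq> {e\<in>M. G e}" "card A = t"
      by (meson obtain_subset_with_card_n)
    then show "G \<in> (\<Union>A\<in>?X. {G. \<forall>e\<in>A. G e})" by auto
  qed
  have "measure_pmf.prob ?Q {G. t \<le> card {e\<in>M. G e}} \<le> measure_pmf.prob ?Q (\<Union>A\<in>?X. {G. \<forall>e\<in>A. G e})"
    by (rule measure_pmf.finite_measure_mono[OF sub]) simp
  also have "\<dots> \<le> (\<Sum>A\<in>?X. measure_pmf.prob ?Q {G. \<forall>e\<in>A. G e})"
    by (rule measure_pmf.finite_measure_subadditive_finite) (use fM in auto)
  also have "\<dots> = (\<Sum>A\<in>?X. p ^ t)"
    by (intro sum.cong refl) (use assms in \<open>auto intro!: prob_all_true\<close>)
  also have "\<dots> = real (card M choose t) * p ^ t"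
    using n_subsets[OF fM, of t] by simp
  finally show ?thesis .
qed

lemma pow_div_fact_le_exp:
  fixes x :: real assumes "0 \<le> x"
  shows "x ^ k / fact k \<le> exp x"
proof -
  have s: "summable (\<lambda>n. x ^ n /\<^sub>R fact n)" using exp_converges sums_summable by blast
  have "sum (\<lambda>n. x ^ n /\<^sub>R fact n) {k} \<le> suminf (\<lambda>n. x ^ n /\<^sub>R fact n)"
    by (rule sum_le_suminf[OF s]) (use assms in auto)
  also have "\<dots> = exp x" using exp_converges sums_unique by metis
  finally show ?thesis by (simp add: divide_inverse_commute)
qed

lemma exp_12_5: "exp (12/5::real) \<le> 12"
proof -
  have "exp (12/5::real) ^ 5 = exp 1 ^ 12"
    by (simp flip: exp_of_nat_mult)
  also have "\<dots> \<le> (272/100) ^ 12" using e_less_272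
    by (intro power_mono) auto
  also have "\<dots> \<le> (12::real) ^ 5" by (simp add: power_divide divide_le_eq)
  finally have "exp (12/5::real) ^ Suc 4 \<le> 12 ^ Suc 4" by simp
  then show ?thesis by (rule power_le_imp_le_base) auto
qed


lemma card_M_bound:
  assumes "finite S" "finite T" "S \<inter> T = {}" "card S = n" "card T = n"
  shows "2 * card {(i,j) \<in> pairs N. i \<in> S \<union> T \<and> j \<in> S \<union> T \<and> (i \<in> S \<or> j \<in> S)} \<le> 3 * n^2"
proof -
  define M where "M = {(i,j) \<in> pairs N. i \<in> S \<union> T \<and> j \<in> S \<union> T \<and> (i \<in> S \<or> j \<in> S)}"
  have fU: "finite ((S \<union> T) \<times> (S \<union> T))" using assms by auto
  have finM: "finite M" by (rule finite_subset[OF _ fU]) (auto simp: M_def)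
  have disj: "M \<inter> prod.swap ` M = {}" by (auto simp: M_def pairs_def)
  have un: "M \<union> prod.swap ` M \<subseteq> (S \<union> T) \<times> (S \<union> T) - T \<times> T"
    using assms(3) by (auto simp: M_def)
  have cU: "card (S \<union> T) = 2 * n" using assms by (simp add: card_Un_disjoint)
  have c1: "card ((S \<union> T) \<times> (S \<union> T) - T \<times> T) = 3 * n^2"
  proof -
    have "card ((S \<union> T) \<times> (S \<union> T) - T \<times> T) = card ((S \<union> T) \<times> (S \<union> T)) - card (T \<times> T)"
      by (rule card_Diff_subset) (use assms in auto)
    also have "\<dots> = (2*n)*(2*n) - n * n" using cU assms by (simp add: card_cartesian_product)
    also have "\<dots> = 3 * n^2" by (simp add: power2_eq_square)
    finally show ?thesis .
  qed
  have "card (M \<union> prod.swap ` M) = card M + card (prod.swap ` M)"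
    by (rule card_Un_disjoint) (use finM disj in auto)
  also have "card (prod.swap ` M) = card M" by (rule card_image) simp
  finally have "2 * card M = card (M \<union> prod.swap ` M)" by simp
  also have "\<dots> \<le> 3 * n^2" using card_mono[OF _ un] c1 fU by simp
  finally show ?thesis by (simp add: M_def)
qed


lemma fail_bound:
  fixes N n :: nat and p :: real
  assumes p0: "0 \<le> p" and p1: "p \<le> 1" and n0: "n > 0"
    and h1: "real n * p \<ge> ln (real N / real n) / 6" and h2: "N \<ge> 3 * n"
  shows "measure_pmf.prob (gnp N p) {G. \<not> (\<forall>S T. S \<subseteq> {1..N} \<and> T \<subseteq> {1..N} \<and> S \<inter> T = {} \<and> card S = n \<and> card T = n
                  \<longrightarrow> real (edges_ST N G S T) \<le> 18 * (real n)^2 * p)} \<le> exp (- real n / 5)"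
proof -
  define L where "L = ln (real N / real n)"
  have r3: "real N / real n \<ge> 3" using h2 n0 by (simp add: field_simps)
  have "ln 3 \<le> L" unfolding L_def using r3 by (subst ln_le_cancel_iff) auto
  then have L1: "L \<ge> 1" using ln3_gt_1 by linarith
  define x where "x = 18 * (real n)^2 * p"
  have x0: "x \<ge> 0" using p0 by (simp add: x_def)
  define t where "t = nat \<lfloor>x\<rfloor> + 1"
  have t_ge: "real t \<ge> x" unfolding t_def using x0 by linarith
  have t_lt: "t \<le> k" if "real k > x" for k :: nat
    using that x0 unfolding t_def by linarith
  have t3: "real t \<ge> 3 * n * L"
  proof -
    have "3 * n * L = 18 * n * (L / 6)" by simp
    also have "\<dots> \<le> 18 * n * (n * p)" using h1 unfolding L_def by (intro mult_left_mono) auto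
    also have "\<dots> = x" by (simp add: x_def power2_eq_square)
    finally show ?thesis using t_ge by linarith
  qed
  define M where "M S T = {(i,j) \<in> pairs N. i \<in> S \<union> T \<and> j \<in> S \<union> T \<and> (i \<in> S \<or> j \<in> S)}" for S T
  define IX where "IX = {(S,T). S \<subseteq> {1..N} \<and> T \<subseteq> {1..N} \<and> S \<inter> T = {} \<and> card S = n \<and> card T = n}"
  define Sub where "Sub = {S. S \<subseteq> {1..N} \<and> card S = n}"
  have IXsub: "IX \<subseteq> Sub \<times> Sub" by (auto simp: IX_def Sub_def)
  have cSub: "card Sub = N choose n" using n_subsets[of "{1..N}" n] by (simp add: Sub_def)
  have fSub: "finite Sub" by (simp add: Sub_def)
  have fIX: "finite IX" using finite_subset[OF IXsub] fSub by blast
  have cIX: "card IX \<le> (N choose n)^2"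
    using card_mono[OF _ IXsub] fSub cSub by (simp add: card_cartesian_product power2_eq_square)
  have fpairs: "finite (pairs N)"
    by (rule finite_subset[of _ "{1..N} \<times> {1..N}"]) (auto simp: pairs_def)
  have Msub: "M S T \<subseteq> pairs N" for S T by (auto simp: M_def)
  have edges_eq: "edges_ST N G S T = card {e \<in> M S T. G e}" for G S T
    unfolding edges_ST_def M_def by (intro arg_cong[where f=card]) auto
  let ?Q = "gnp N p"
  let ?bad = "{G. \<not> (\<forall>S T. S \<subseteq> {1..N} \<and> T \<subseteq> {1..N} \<and> S \<inter> T = {} \<and> card S = n \<and> card T = n
                  \<longrightarrow> real (edges_ST N G S T) \<le> 18 * (real n)^2 * p)}"
  have bad_sub: "?bad \<subseteq> (\<Union>ST\<in>IX. {G. t \<le> card {e \<in> M (fst ST) (snd ST). G e}})"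
  proof
    fix G assume "G \<in> ?bad"
    then obtain S T where ST: "S \<subseteq> {1..N}" "T \<subseteq> {1..N}" "S \<inter> T = {}" "card S = n" "card T = n"
      "real (edges_ST N G S T) > x" by (auto simp: x_def not_le)
    then have "t \<le> card {e \<in> M S T. G e}" using t_lt edges_eq by metis
    moreover have "(S,T) \<in> IX" using ST by (simp add: IX_def)
    ultimately show "G \<in> (\<Union>ST\<in>IX. {G. t \<le> card {e \<in> M (fst ST) (snd ST). G e}})" by force
  qed
  have each: "measure_pmf.prob ?Q {G. t \<le> card {e \<in> M (fst ST) (snd ST). G e}} \<le> (exp 1 / 12) ^ t"
    if "ST \<in> IX" for ST
  proof -
    obtain S T where STe: "ST = (S,T)" by fastforce
    have ST: "S \<subseteq> {1..N}" "T \<subseteq> {1..N}" "S \<inter> T = {}" "card S = n" "card T = n"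
      using that STe by (auto simp: IX_def)
    define m where "m = card (M S T)"
    have m2: "2 * m \<le> 3 * n^2" unfolding m_def M_def
    proof (rule card_M_bound)
      show "finite S" by (rule finite_subset[OF ST(1)]) simp
      show "finite T" by (rule finite_subset[OF ST(2)]) simp
    qed (use ST in auto)
    have "measure_pmf.prob ?Q {G. t \<le> card {e \<in> M S T. G e}} \<le> real (m choose t) * p ^ t"
      unfolding gnp_def m_def by (rule tail_bound[OF fpairs Msub p0 p1])
    also have "real (m choose t) \<le> real m ^ t / fact t"
    proof -
      have "real ((m choose t) * fact t) \<le> real (m ^ t)" by (rule of_nat_mono[OF binomial_fact_pow])
      then show ?thesis by (simp add: field_simps)
    qed
    then have "real (m choose t) * p ^ t \<le> real m ^ t / fact t * p ^ t"
      using p0 by (intro mult_right_mono) auto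
    also have "\<dots> = (real m * p) ^ t / fact t" by (simp add: power_mult_distrib)
    also have "\<dots> \<le> (real t / 12) ^ t / fact t"
    proof -
      have "12 * (real m * p) = 6 * real (2 * m) * p" by simp
      also have "\<dots> \<le> 6 * real (3 * n^2) * p" using m2 p0
        by (intro mult_right_mono mult_left_mono) (use of_nat_le_iff in blast, simp, simp)
      also have "\<dots> = x" by (simp add: x_def)
      finally have "real m * p \<le> real t / 12" using t_ge by linarith
      then show ?thesis using p0 by (intro divide_right_mono power_mono) auto
    qed
    also have "\<dots> = (1/12) ^ t * (real t ^ t / fact t)" by (simp add: power_divide)
    also have "\<dots> \<le> (1/12) ^ t * exp (real t)"
      by (intro mult_left_mono pow_div_fact_le_exp) auto
    also have "\<dots> = (exp 1 / 12) ^ t"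
      by (simp add: power_divide flip: exp_of_nat_mult)
    finally show ?thesis using STe by simp
  qed
  have "measure_pmf.prob ?Q ?bad \<le> measure_pmf.prob ?Q (\<Union>ST\<in>IX. {G. t \<le> card {e \<in> M (fst ST) (snd ST). G e}})"
    by (rule measure_pmf.finite_measure_mono[OF bad_sub]) simp
  also have "\<dots> \<le> (\<Sum>ST\<in>IX. measure_pmf.prob ?Q {G. t \<le> card {e \<in> M (fst ST) (snd ST). G e}})"
    by (rule measure_pmf.finite_measure_subadditive_finite) (use fIX in auto)
  also have "\<dots> \<le> (\<Sum>ST\<in>IX. (exp 1 / 12) ^ t)"
    by (intro sum_mono each)
  also have "\<dots> = real (card IX) * (exp 1 / 12) ^ t" by simp
  also have "\<dots> \<le> real ((N choose n)^2) * (exp 1 / 12) ^ t"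
    using cIX by (intro mult_right_mono) auto
  also have "\<dots> \<le> exp (2 * n * (L + 1)) * exp (- (7/5) * (3 * n * L))"
  proof (intro mult_mono)
    have "real (N choose n) \<le> real N ^ n / fact n"
    proof -
      have "real ((N choose n) * fact n) \<le> real (N ^ n)" by (rule of_nat_mono[OF binomial_fact_pow])
      then show ?thesis by (simp add: field_simps)
    qed
    also have "\<dots> = (real N / real n) ^ n * (real n ^ n / fact n)"
      using n0 by (simp add: power_divide)
    also have "\<dots> \<le> (real N / real n) ^ n * exp (real n)"
      by (intro mult_left_mono pow_div_fact_le_exp) auto
    also have "\<dots> = (exp L * exp 1) ^ n"
    proof -
      have e1: "exp (real n) = exp 1 ^ n" using exp_of_nat_mult[of n 1] by simp
      have e2: "exp L = real N / real n" using r3 by (simp add: L_def)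
      show ?thesis unfolding e1 e2 by (simp add: power_mult_distrib[symmetric])
    qed
    also have "\<dots> = exp (n * (L + 1))"
      by (simp add: exp_add exp_of_nat_mult)
    finally have "real (N choose n) \<le> exp (n * (L + 1))" .
    then have "real (N choose n) ^ 2 \<le> exp (n * (L + 1)) ^ 2" by (intro power_mono) auto
    also have "\<dots> = exp (2 * n * (L + 1))" by (simp flip: exp_of_nat_mult)
    finally show "real ((N choose n)^2) \<le> exp (2 * n * (L + 1))" by simp
  next
    have l12: "12/5 \<le> ln (12::real)" using exp_12_5 by (subst ln_ge_iff) auto
    have "exp 1 / 12 = exp (1 - ln (12::real))" by (simp add: exp_diff)
    also have "\<dots> \<le> exp (- (7/5::real))" using l12 by simp
    finally have "(exp 1 / (12::real)) ^ t \<le> exp (- (7/5::real)) ^ t" by (intro power_mono) auto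
    also have "\<dots> = exp (- (7/5) * real t)" by (simp flip: exp_of_nat_mult add: mult.commute)
    also have "\<dots> \<le> exp (- (7/5) * (3 * n * L))" using t3 by (simp add: mult_ac)
    finally show "(exp 1 / 12) ^ t \<le> exp (- (7/5) * (3 * n * L))" .
  qed auto
  also have "\<dots> = exp (2 * n * (L + 1) - (21/5) * n * L)" by (simp add: exp_add [symmetric] algebra_simps)
  also have "\<dots> \<le> exp (- real n / 5)"
  proof -
    have "real n * L \<ge> real n * 1" using L1 by (intro mult_left_mono) auto
    then show ?thesis by (simp add: algebra_simps)
  qed
  finally show ?thesis .
qed


theorem lemma2p5:
  fixes N :: "nat \<Rightarrow> nat" and p :: "nat \<Rightarrow> real"
  assumes p_prob: "\<And>n. 0 \<le> p n \<and> p n \<le> 1"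
    and hyp: "eventually (\<lambda>n. real n * p n \<ge> ln (real (N n) / real n) / 6 \<and> N n \<ge> 3 * n) sequentially"
  shows "(\<lambda>n. measure_pmf.prob (gnp (N n) (p n))
            {G. \<forall>S T. S \<subseteq> {1..N n} \<and> T \<subseteq> {1..N n} \<and> S \<inter> T = {} \<and> card S = n \<and> card T = n
                  \<longrightarrow> real (edges_ST (N n) G S T) \<le> 18 * (real n)^2 * p n})
         \<longlonglongrightarrow> 1"
proof (rule tendsto_sandwich[where f = "\<lambda>n. 1 - exp (- real n / 5)" and h = "\<lambda>n. 1"])
  show "(\<lambda>n. 1 - exp (- real n / 5)) \<longlonglongrightarrow> 1" by real_asymp
  show "(\<lambda>n. 1::real) \<longlonglongrightarrow> 1" by simp
  show "\<forall>\<^sub>F n in sequentially. measure_pmf.prob (gnp (N n) (p n))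
            {G. \<forall>S T. S \<subseteq> {1..N n} \<and> T \<subseteq> {1..N n} \<and> S \<inter> T = {} \<and> card S = n \<and> card T = n
                  \<longrightarrow> real (edges_ST (N n) G S T) \<le> 18 * (real n)^2 * p n} \<le> 1"
    by (simp add: measure_pmf.prob_le_1)
  show "\<forall>\<^sub>F n in sequentially. 1 - exp (- real n / 5) \<le> measure_pmf.prob (gnp (N n) (p n))
            {G. \<forall>S T. S \<subseteq> {1..N n} \<and> T \<subseteq> {1..N n} \<and> S \<inter> T = {} \<and> card S = n \<and> card T = n
                  \<longrightarrow> real (edges_ST (N n) G S T) \<le> 18 * (real n)^2 * p n}"
    using hyp eventually_gt_at_top[of 0]
  proof eventually_elim
    case (elim n)
    let ?P = "\<lambda>G. \<forall>S T. S \<subseteq> {1..N n} \<and> T \<subseteq> {1..N n} \<and> S \<inter> T = {} \<and> card S = n \<and> card T = n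
                  \<longrightarrow> real (edges_ST (N n) G S T) \<le> 18 * (real n)^2 * p n"
    have eq: "{G. ?P G} = space (measure_pmf (gnp (N n) (p n))) - {G. \<not> ?P G}" by auto
    have "measure_pmf.prob (gnp (N n) (p n)) {G. ?P G} = 1 - measure_pmf.prob (gnp (N n) (p n)) {G. \<not> ?P G}"
      unfolding eq by (rule measure_pmf.prob_compl) simp
    moreover have "measure_pmf.prob (gnp (N n) (p n)) {G. \<not> ?P G} \<le> exp (- real n / 5)"
      by (rule fail_bound) (use elim p_prob in auto)
    ultimately show ?case by simp
  qed
qed

end
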